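(* Let $n,q\ge1$ and $c\ge0$ be integers. If there exists a $PComS(n,q,-c)$, then there exists a partial Hadamard matrix $PH(n\times(nq+c))$.
   Context: $\mathbb{Z}_2^n$ is the set of sequences $X=(x_0,\dots,x_{n-1})$ with entries in $\{+1,-1\}$, indices mod $n$. The periodic autocorrelation is $\mathsf{P}_X(k)=\sum_{i=0}^{n-1}x_ix_{i+k}$; it depends only on the cyclic-shift class $X_C$. A $PComS(n,q,c)$ is a list (repetitions allowed) of $q$ cyclic-shift classes $A_{1C},\dots,A_{qC}$ with $A_i\in\mathbb{Z}_2^n$ such that $\sum_{i=1}^q\mathsf{P}_{A_i}(k)=c$ for all $1\le k\le n-1$. A partial Hadamard matrix $PH(k\times m)$ is a $k\times m$ matrix $H$ with all entries in $\{+1,-1\}$ satisfying $HH^{t}=mI_k$. *)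

theory Defs
  imports "Jordan_Normal_Form.Matrix"
begin

text \<open>Elements of Z_2^n: +-1 sequences of length n, indices taken mod n.\<close>
definition Z2seq :: "nat \<Rightarrow> int list \<Rightarrow> bool" where
  "Z2seq n X \<longleftrightarrow> length X = n \<and> set X \<subseteq> {1, -1}"

definition PAF :: "int list \<Rightarrow> nat \<Rightarrow> int" where
  "PAF X k = (\<Sum>i<length X. X ! i * X ! ((i + k) mod length X))"

text \<open>A PComS(n,q,c), given by a list of q representatives of the cyclic-shift
  classes (autocorrelation depends only on the class).\<close>
definition is_PComS :: "nat \<Rightarrow> nat \<Rightarrow> int \<Rightarrow> int list list \<Rightarrow> bool" where
  "is_PComS n q c As \<longleftrightarrow> length As = q \<and> (\<forall>A\<in>set As. Z2seq n A) \<and>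
     (\<forall>k\<in>{1..n-1}. (\<Sum>A\<leftarrow>As. PAF A k) = c)"

definition partial_hadamard :: "nat \<Rightarrow> nat \<Rightarrow> int mat \<Rightarrow> bool" where
  "partial_hadamard k m H \<longleftrightarrow> H \<in> carrier_mat k m \<and>
     (\<forall>i<k. \<forall>j<m. H $$ (i, j) \<in> {1, -1}) \<and>
     H * H\<^sup>T = of_nat m \<cdot>\<^sub>m 1\<^sub>m k"

end

theory Submission
  imports Defs
begin

lemma rot_sum:
  fixes g :: "nat \<Rightarrow> int"
  assumes "n > 0"
  shows "(\<Sum>t<n. g ((i + t) mod n)) = (\<Sum>s<n. g s)"
proof -
  have inj: "inj_on (\<lambda>t. (i + t) mod n) {..<n}"
  proof (rule inj_onI)
    fix x y assume x: "x \<in> {..<n}" and y: "y \<in> {..<n}" and e: "(i + x) mod n = (i + y) mod n"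
    have "x mod n = y mod n" using e by (simp add: nat_mod_eq_iff)
    then show "x = y" using x y by simp
  qed
  have img: "(\<lambda>t. (i + t) mod n) ` {..<n} = {..<n}"
    using inj assms by (intro endo_inj_surj) auto
  have "(\<Sum>s<n. g s) = (\<Sum>s\<in>(\<lambda>t. (i + t) mod n) ` {..<n}. g s)" using img by simp
  also have "\<dots> = (\<Sum>t<n. g ((i + t) mod n))" using sum.reindex[OF inj] by simp
  finally show ?thesis by simp
qed

lemma circ_inner:
  fixes A :: "int list"
  assumes "length A = n" "n > 0" "i < n" "i' < n"
  shows "(\<Sum>t<n. A ! ((i + t) mod n) * A ! ((i' + t) mod n)) = PAF A ((i' + n - i) mod n)"
proof -
  have "\<And>t. (i' + t) mod n = ((i + t) mod n + (i' + n - i) mod n) mod n"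
  proof -
    fix t
    have "((i + t) mod n + (i' + n - i) mod n) mod n = ((i + t) + (i' + n - i)) mod n"
      by (simp add: mod_add_eq)
    also have "(i + t) + (i' + n - i) = (i' + t) + 1 * n" using assms by simp
    finally show "(i' + t) mod n = ((i + t) mod n + (i' + n - i) mod n) mod n"
      by (metis mod_mult_self1)
  qed
  then have "(\<Sum>t<n. A ! ((i + t) mod n) * A ! ((i' + t) mod n)) =
     (\<Sum>t<n. (\<lambda>s. A ! s * A ! ((s + (i' + n - i) mod n) mod n)) ((i + t) mod n))" by simp
  also have "\<dots> = (\<Sum>s<n. A ! s * A ! ((s + (i' + n - i) mod n) mod n))"
    by (rule rot_sum[OF assms(2)])
  finally show ?thesis unfolding PAF_def using assms(1) by simp
qed


lemma PAF0:
  assumes "length A = n" "set A \<subseteq> {1, -1}"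
  shows "PAF A 0 = int n"
proof -
  have "\<And>s. s < n \<Longrightarrow> A ! s * A ! s = 1"
  proof -
    fix s assume "s < n"
    then have "A ! s \<in> {1, -1}" using assms nth_mem by blast
    then show "A ! s * A ! s = 1" by auto
  qed
  then show ?thesis unfolding PAF_def using assms(1) by simp
qed

lemma block_sum:
  fixes As :: "int list list" and g :: "nat \<Rightarrow> int"
  shows "(\<Sum>l<n * q. g l) = (\<Sum>j<q. \<Sum>t<n. g (j * n + t))"
proof -
  have "(\<Sum>l<n * q. g l) = (\<Sum>l<q * n. g l)" by (simp add: mult.commute)
  also have "\<dots> = (\<Sum>j<q. sum g {j * n..<j * n + n})" by (rule sum.nat_group[symmetric])
  also have "\<dots> = (\<Sum>j<q. \<Sum>t<n. g (j * n + t))"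
  proof (rule sum.cong[OF refl])
    fix j
    show "sum g {j * n..<j * n + n} = (\<Sum>t<n. g (j * n + t))"
      by (subst sum.atLeastLessThan_shift_0) (simp add: atLeast0LessThan comp_def)
  qed
  finally show ?thesis .
qed

lemma gram_lemma:
  fixes As :: "int list list" and n q c :: nat
  assumes n0: "n > 0" and len: "length As = q" and Z: "\<And>A. A \<in> set As \<Longrightarrow> length A = n \<and> set A \<subseteq> {1, -1}"
    and P: "\<And>k. k \<in> {1..n-1} \<Longrightarrow> (\<Sum>A\<leftarrow>As. PAF A k) = - int c"
    and f: "f = (\<lambda>(i, l). if l < n * q then As ! (l div n) ! ((i + l mod n) mod n) else (1::int))"
    and i: "i < n" and i': "i' < n"
  shows "(\<Sum>l<n * q + c. f (i, l) * f (i', l)) = (if i = i' then int (n * q + c) else 0)"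
proof -
  define k where "k = (i' + n - i) mod n"
  have split: "{..<n * q + c} = {..<n * q} \<union> {n * q..<n * q + c}" by auto
  have "(\<Sum>l<n * q + c. f (i, l) * f (i', l)) =
      (\<Sum>l<n * q. f (i, l) * f (i', l)) + (\<Sum>l\<in>{n * q..<n * q + c}. f (i, l) * f (i', l))"
    unfolding split by (rule sum.union_disjoint) auto
  also have "(\<Sum>l\<in>{n * q..<n * q + c}. f (i, l) * f (i', l)) = int c"
    using f by simp
  also have "(\<Sum>l<n * q. f (i, l) * f (i', l)) = (\<Sum>j<q. \<Sum>t<n. f (i, j * n + t) * f (i', j * n + t))"
    by (rule block_sum)
  also have "\<dots> = (\<Sum>j<q. PAF (As ! j) k)"
  proof (intro sum.cong refl)
    fix j assume j: "j \<in> {..<q}"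
    have "(\<Sum>t<n. f (i, j * n + t) * f (i', j * n + t)) =
        (\<Sum>t<n. As ! j ! ((i + t) mod n) * As ! j ! ((i' + t) mod n))"
    proof (intro sum.cong refl)
      fix t assume t: "t \<in> {..<n}"
      have lt: "j * n + t < n * q"
      proof -
        have "j * n + t < j * n + n" using t by simp
        also have "\<dots> = (j + 1) * n" by simp
        also have "\<dots> \<le> q * n" using j by (intro mult_right_mono) auto
        finally show ?thesis by (simp add: mult.commute)
      qed
      have d: "(j * n + t) div n = j" and m: "(j * n + t) mod n = t" using t n0 by auto
      show "f (i, j * n + t) * f (i', j * n + t) = As ! j ! ((i + t) mod n) * As ! j ! ((i' + t) mod n)"
        using lt d m f by simp
    qed
    also have "\<dots> = PAF (As ! j) k"
      unfolding k_def using circ_inner[OF _ n0 i i'] Z[of "As ! j"] j len by auto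
    finally show "(\<Sum>t<n. f (i, j * n + t) * f (i', j * n + t)) = PAF (As ! j) k" .
  qed
  also have "(\<Sum>j<q. PAF (As ! j) k) = (\<Sum>A\<leftarrow>As. PAF A k)"
    using len by (simp add: sum_list_sum_nth atLeast0LessThan)
  finally have eq: "(\<Sum>l<n * q + c. f (i, l) * f (i', l)) = (\<Sum>A\<leftarrow>As. PAF A k) + int c" .
  show ?thesis
  proof (cases "i = i'")
    case True
    then have "k = 0" unfolding k_def by simp
    then have "(\<Sum>A\<leftarrow>As. PAF A k) = (\<Sum>A\<leftarrow>As. int n)"
      using Z PAF0 by (metis (no_types, lifting) map_eq_conv)
    also have "\<dots> = int n * int q" using len by (simp add: sum_list_triv)
    finally show ?thesis using eq True by simp
  next
    case False
    have "k \<noteq> 0"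
    proof
      assume "k = 0"
      then have "(i' + n - i) mod n = 0" unfolding k_def .
      show False
      proof (cases "i' < i")
        case True
        then have "(i' + n - i) mod n = i' + n - i" using i by simp
        then show False using \<open>(i' + n - i) mod n = 0\<close> True i by simp
      next
        case f2: False
        then have "i' + n - i = (i' - i) + 1 * n" by simp
        then have "(i' + n - i) mod n = (i' - i) mod n" by (metis mod_mult_self1)
        also have "\<dots> = i' - i" using i' by simp
        finally show False using \<open>(i' + n - i) mod n = 0\<close> f2 False by simp
      qed
    qed
    moreover have "k < n" unfolding k_def using n0 by simp
    ultimately have "k \<in> {1..n-1}" by auto
    then show ?thesis using eq P False by simp
  qed
qed

theorem theorem20:
  fixes n q c :: nat
  assumes "n \<ge> 1" and "q \<ge> 1"
    and "\<exists>As. is_PComS n q (- int c) As"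
  shows "\<exists>H. partial_hadamard n (n * q + c) H"
proof -
  obtain As where As: "is_PComS n q (- int c) As" using assms(3) by blast
  have len: "length As = q" and Z: "\<And>A. A \<in> set As \<Longrightarrow> length A = n \<and> set A \<subseteq> {1, -1}"
    and P: "\<And>k. k \<in> {1..n-1} \<Longrightarrow> (\<Sum>A\<leftarrow>As. PAF A k) = - int c"
    using As unfolding is_PComS_def Z2seq_def by auto
  have n0: "n > 0" using assms(1) by simp
  define m where "m = n * q + c"
  define f where "f = (\<lambda>(i, l). if l < n * q then As ! (l div n) ! ((i + l mod n) mod n) else (1::int))"
  define H where "H = mat n m f"
  have Hc: "H \<in> carrier_mat n m" unfolding H_def by simp
  have entries: "\<forall>i<n. \<forall>l<m. H $$ (i, l) \<in> {1, -1}"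
  proof (intro allI impI)
    fix i l assume i: "i < n" and l: "l < m"
    show "H $$ (i, l) \<in> {1, -1}"
    proof (cases "l < n * q")
      case True
      then have "l div n < q" by (simp add: less_mult_imp_div_less mult.commute)
      then have A: "As ! (l div n) \<in> set As" using len by simp
      have "(i + l mod n) mod n < length (As ! (l div n))" using Z[OF A] n0 by simp
      then have "As ! (l div n) ! ((i + l mod n) mod n) \<in> set (As ! (l div n))" by (rule nth_mem)
      then have "As ! (l div n) ! ((i + l mod n) mod n) \<in> {1, -1}" using Z[OF A] by blast
      then show ?thesis using True i l unfolding H_def f_def by simp
    next
      case False
      then show ?thesis using i l unfolding H_def f_def by simp
    qed
  qed
  have "H * H\<^sup>T = of_nat m \<cdot>\<^sub>m 1\<^sub>m n"
  proof (rule eq_matI)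
    fix i j assume i: "i < dim_row (of_nat m \<cdot>\<^sub>m (1\<^sub>m n :: int mat))" and j: "j < dim_col (of_nat m \<cdot>\<^sub>m (1\<^sub>m n :: int mat))"
    then have i: "i < n" and j: "j < n" by auto
    have "(H * H\<^sup>T) $$ (i, j) = row H i \<bullet> row H j"
      using i j Hc by (simp add: index_mult_mat)
    also have "\<dots> = (\<Sum>l<m. f (i, l) * f (j, l))"
      using i j unfolding H_def by (simp add: scalar_prod_def atLeast0LessThan)
    also have "\<dots> = (if i = j then int m else 0)"
      unfolding m_def by (rule gram_lemma[OF n0 len Z P f_def i j])
    finally show "(H * H\<^sup>T) $$ (i, j) = (of_nat m \<cdot>\<^sub>m 1\<^sub>m n) $$ (i, j)"
      using i j by simp
  qed (simp_all add: H_def)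
  then show ?thesis unfolding partial_hadamard_def m_def[symmetric] using Hc entries by blast
qed

end
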